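(* For every connected finite simple graph $\Gamma$ on vertex set $[n]$, $n\ge1$, $$F_\Gamma=\sum_{i\in[n]}\big(F_{\Gamma\setminus\{i\}}\big)_1,$$ where $\Gamma\setminus\{i\}$ is the induced subgraph on $[n]\setminus\{i\}$.
   Context: For a coloring $\lambda:V\to\mathbb{N}=\{1,2,\dots\}$ of a finite simple graph $\Gamma$ with values $i_1<\dots<i_k$, let $I_j=\lambda^{-1}(\{i_1,\dots,i_j\})$, $I_0=\emptyset$. It is ordered if for each $j$, no two distinct vertices $u,w$ with $\lambda(u)=\lambda(w)=i_j$ are joined by a path in $\Gamma$ (possibly a single edge) all of whose internal vertices lie in $I_{j-1}$. $F_\Gamma=\sum_{\lambda\text{ ordered}}\prod_{v\in V}x_{\lambda(v)}$, with $F_\Gamma=1$ for the graph with no vertices (it equals the lattice point enumerator of the graph-associahedron of $\Gamma$). For a composition $\alpha=(a_1,\dots,a_k)$, $M_\alpha=\sum_{i_1<\dots<i_k}x_{i_1}^{a_1}\cdots x_{i_k}^{a_k}$, $M_{()}=1$. The shifting operator $G\mapsto(G)_1$ on quasisymmetric functions is the linear map with $(M_{(a_1,\dots,a_k)})_1=M_{(a_1,\dots,a_k,1)}$. *)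

theory Defs
  imports Main
begin

text \<open>Formal power series in the variables x_1, x_2, ... with integer coefficients,
  represented by their coefficient function on monomials.  A monomial is an exponent
  vector m :: nat \<Rightarrow> nat (m i = exponent of x_i; only finitely supported m with
  m 0 = 0 are genuine monomials, all other coefficients are 0).\<close>

type_synonym qseries = "(nat \<Rightarrow> nat) \<Rightarrow> int"

definition simple_graph :: "nat set \<Rightarrow> (nat \<Rightarrow> nat \<Rightarrow> bool) \<Rightarrow> bool" where
  "simple_graph V E \<longleftrightarrow> finite V \<and>
     (\<forall>u v. E u v \<longrightarrow> u \<in> V \<and> v \<in> V \<and> u \<noteq> v \<and> E v u)"

definition induced :: "(nat \<Rightarrow> nat \<Rightarrow> bool) \<Rightarrow> nat set \<Rightarrow> nat \<Rightarrow> nat \<Rightarrow> bool" where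
  "induced E S = (\<lambda>u v. E u v \<and> u \<in> S \<and> v \<in> S)"

definition is_walk :: "(nat \<Rightarrow> nat \<Rightarrow> bool) \<Rightarrow> nat list \<Rightarrow> bool" where
  "is_walk E xs \<longleftrightarrow> (\<forall>i. Suc i < length xs \<longrightarrow> E (xs ! i) (xs ! Suc i))"

definition connected_graph :: "nat set \<Rightarrow> (nat \<Rightarrow> nat \<Rightarrow> bool) \<Rightarrow> bool" where
  "connected_graph V E \<longleftrightarrow>
     (\<forall>u\<in>V. \<forall>w\<in>V. \<exists>xs. xs \<noteq> [] \<and> hd xs = u \<and> last xs = w \<and> set xs \<subseteq> V \<and> is_walk E xs)"

definition path_through :: "(nat \<Rightarrow> nat \<Rightarrow> bool) \<Rightarrow> nat set \<Rightarrow> nat \<Rightarrow> nat \<Rightarrow> bool" where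
  "path_through E S u w \<longleftrightarrow>
     (\<exists>ps. set ps \<subseteq> S \<and> distinct (u # ps @ [w]) \<and> is_walk E (u # ps @ [w]))"

text \<open>Ordered colorings \<lambda> : V \<rightarrow> {1,2,...}; \<lambda> is normalised to 0 outside V.
  I_{j-1} is the set of vertices of colour smaller than i_j.\<close>
definition ordered_coloring :: "nat set \<Rightarrow> (nat \<Rightarrow> nat \<Rightarrow> bool) \<Rightarrow> (nat \<Rightarrow> nat) \<Rightarrow> bool" where
  "ordered_coloring V E col \<longleftrightarrow>
     (\<forall>v. v \<notin> V \<longrightarrow> col v = 0) \<and> (\<forall>v\<in>V. col v \<ge> 1) \<and>
     (\<forall>u\<in>V. \<forall>w\<in>V. u \<noteq> w \<and> col u = col w \<longrightarrow>
        \<not> path_through E {v\<in>V. col v < col u} u w)"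

definition F_graph :: "nat set \<Rightarrow> (nat \<Rightarrow> nat \<Rightarrow> bool) \<Rightarrow> qseries" where
  "F_graph V E m = int (card {col. ordered_coloring V E col \<and>
                                (\<forall>i. m i = card {v\<in>V. col v = i})})"

definition composition :: "nat list \<Rightarrow> bool" where
  "composition \<alpha> \<longleftrightarrow> (\<forall>a\<in>set \<alpha>. a \<ge> 1)"

definition M_qsym :: "nat list \<Rightarrow> qseries" where
  "M_qsym \<alpha> m = int (card {is. length is = length \<alpha> \<and> sorted_wrt (<) is \<and> (\<forall>j\<in>set is. j \<ge> 1) \<and>
        m = (\<lambda>x. \<Sum>j<length \<alpha>. if is ! j = x then \<alpha> ! j else 0)})"

text \<open>The monomial x_1^{a_1} ... x_k^{a_k}; its coefficient in a quasisymmetric G is the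
  coefficient of M_\<alpha> in the expansion of G.\<close>
definition comp_monomial :: "nat list \<Rightarrow> nat \<Rightarrow> nat" where
  "comp_monomial \<alpha> = (\<lambda>x. if 1 \<le> x \<and> x \<le> length \<alpha> then \<alpha> ! (x - 1) else 0)"

text \<open>Shifting operator: linear extension of M_\<alpha> \<mapsto> M_{\<alpha>,1}, i.e.
  (\<Sum>_\<alpha> c_\<alpha> M_\<alpha>)_1 = \<Sum>_\<alpha> c_\<alpha> M_{\<alpha>,1}, computed coefficientwise
  (at each monomial only finitely many (at most one) terms are nonzero).\<close>
definition shift1 :: "qseries \<Rightarrow> qseries" where
  "shift1 G m = (\<Sum>\<alpha> \<in> {\<alpha>. composition \<alpha> \<and> M_qsym (\<alpha> @ [1]) m \<noteq> 0}.
                    G (comp_monomial \<alpha>) * M_qsym (\<alpha> @ [1]) m)"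

end

theory Submission
  imports Defs
begin



lemma walk_Cons: "is_walk E (x # y # xs) \<longleftrightarrow> E x y \<and> is_walk E (y # xs)"
  unfolding is_walk_def
  by (auto simp: nth_Cons split: nat.splits)

lemma walk_snoc: "xs \<noteq> [] \<Longrightarrow> is_walk E (xs @ [w]) \<longleftrightarrow> is_walk E xs \<and> E (last xs) w"
proof (induction xs)
  case (Cons x xs)
  then show ?case by (cases xs) (auto simp: walk_Cons, auto simp: is_walk_def)
qed simp

lemma walk_drop: "is_walk E xs \<Longrightarrow> is_walk E (drop k xs)"
  unfolding is_walk_def by auto

lemma shortcut:
  assumes sg: "\<And>u v. E u v \<Longrightarrow> u \<noteq> v"
  shows "is_walk E (u # ys @ [w]) \<Longrightarrow> set ys \<subseteq> S \<Longrightarrow> u \<noteq> w \<Longrightarrow> path_through E S u w"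
proof (induction ys arbitrary: u)
  case Nil
  then show ?case unfolding path_through_def by (intro exI[of _ "[]"]) auto
next
  case (Cons y ys)
  have Euy: "E u y" and wy: "is_walk E (y # ys @ [w])" using Cons.prems(1)
    by (auto simp: walk_Cons)
  show ?case
  proof (cases "y = w")
    case True
    then show ?thesis using Euy Cons.prems unfolding path_through_def
      by (intro exI[of _ "[]"]) (auto simp: is_walk_def)
  next
    case False
    from Cons.IH[OF wy] Cons.prems False obtain ps where
      ps: "set ps \<subseteq> S" "distinct (y # ps @ [w])" "is_walk E (y # ps @ [w])"
      unfolding path_through_def by auto
    show ?thesis
    proof (cases "u \<in> set ps")
      case False
      have "u \<noteq> y" using sg Euy by auto
      then show ?thesis unfolding path_through_def using ps False Cons.prems Euy
        by (intro exI[of _ "y # ps"]) (auto simp: walk_Cons)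
    next
      case True
      then obtain a b where ab: "ps = a @ u # b" by (meson split_list)
      have "is_walk E (drop (Suc (length a)) (y # ps @ [w]))" by (rule walk_drop[OF ps(3)])
      moreover have "drop (Suc (length a)) (y # ps @ [w]) = u # b @ [w]" using ab by simp
      ultimately have "is_walk E (u # b @ [w])" by simp
      moreover have "distinct (u # b @ [w])" using ps(2) ab by auto
      moreover have "set b \<subseteq> S" using ps(1) ab by auto
      ultimately show ?thesis unfolding path_through_def by blast
    qed
  qed
qed

lemma reach_max:
  fixes col :: "nat \<Rightarrow> nat"
  assumes sg: "\<And>u v. E u v \<Longrightarrow> u \<noteq> v"
    and cu: "col u = c" and lec: "\<And>v. v \<in> V \<Longrightarrow> col v \<le> c"
  shows "is_walk E (u # ys @ [w]) \<Longrightarrow> set ys \<subseteq> V \<Longrightarrow> w \<in> V \<Longrightarrow> w \<noteq> u \<Longrightarrow>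
    (\<exists>w'. col w' = c \<and> w' \<noteq> u \<and> path_through E {v\<in>V. col v < c} u w') \<or>
    (col w < c \<and> (\<exists>ps. set ps \<subseteq> {v\<in>V. col v < c} \<and> is_walk E (u # ps @ [w])))"
proof (induction ys arbitrary: w rule: rev_induct)
  case Nil
  show ?case
  proof (cases "col w = c")
    case True
    then show ?thesis using Nil shortcut[OF sg, where u=u and ys="[]" and w=w and S="{v\<in>V. col v < c}"] by auto
  next
    case False
    then have "col w < c" using lec[of w] Nil by auto
    then show ?thesis using Nil by (intro disjI2) (auto intro!: exI[of _ "[]"])
  qed
next
  case (snoc z zs)
  have wz: "is_walk E (u # zs @ [z])" and Ezw: "E z w"
    using snoc.prems(1) walk_snoc[of "u # zs @ [z]" E w] by auto
  show ?case
  proof (cases "z = u")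
    case True
    show ?thesis
    proof (cases "col w = c")
      case c: True
      then show ?thesis using True Ezw snoc shortcut[OF sg, where u=u and ys="[]" and w=w and S="{v\<in>V. col v < c}"] by (auto simp: is_walk_def)
    next
      case False
      then have "col w < c" using lec[of w] snoc.prems by auto
      then show ?thesis using True Ezw by (intro disjI2) (auto intro: exI[of _ "[]"] simp: is_walk_def)
    qed
  next
    case False
    from snoc.IH[OF wz] snoc.prems False
    have "(\<exists>w'. col w' = c \<and> w' \<noteq> u \<and> path_through E {v\<in>V. col v < c} u w') \<or>
      (col z < c \<and> (\<exists>ps. set ps \<subseteq> {v\<in>V. col v < c} \<and> is_walk E (u # ps @ [z])))" by auto
    then show ?thesis
    proof
      assume "col z < c \<and> (\<exists>ps. set ps \<subseteq> {v\<in>V. col v < c} \<and> is_walk E (u # ps @ [z]))"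
      then obtain ps where ps: "col z < c" "set ps \<subseteq> {v\<in>V. col v < c}" "is_walk E (u # ps @ [z])" by auto
      have zV: "z \<in> V" using snoc.prems by auto
      have w2: "is_walk E (u # (ps @ [z]) @ [w])" using ps(3) Ezw walk_snoc[of "u # ps @ [z]" E w] by simp
      have s2: "set (ps @ [z]) \<subseteq> {v\<in>V. col v < c}" using ps zV by auto
      show ?thesis
      proof (cases "col w = c")
        case True
        then show ?thesis using shortcut[OF sg w2 s2] snoc.prems by auto
      next
        case False
        then have "col w < c" using lec[of w] snoc.prems by auto
        then show ?thesis using w2 s2 by blast
      qed
    qed auto
  qed
qed




definition spread :: "nat list \<Rightarrow> nat list \<Rightarrow> nat \<Rightarrow> nat" where
  "spread is \<beta> = (\<lambda>x. \<Sum>j<length \<beta>. if is ! j = x then \<beta> ! j else 0)"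

lemma spread_nth:
  assumes "distinct is" "length \<beta> = length is" "j < length is"
  shows "spread is \<beta> (is ! j) = \<beta> ! j"
proof -
  have "spread is \<beta> (is ! j) = (\<Sum>j'<length \<beta>. if j = j' then \<beta> ! j' else 0)"
    unfolding spread_def using assms by (intro sum.cong) (auto simp: nth_eq_iff_index_eq)
  also have "\<dots> = \<beta> ! j" using assms by (subst sum.delta') auto
  finally show ?thesis .
qed

lemma spread_out:
  assumes "x \<notin> set is" "length \<beta> = length is"
  shows "spread is \<beta> x = 0"
  unfolding spread_def using assms by (intro sum.neutral) (auto)

definition Pis :: "nat list \<Rightarrow> (nat \<Rightarrow> nat) \<Rightarrow> nat list \<Rightarrow> bool" where
  "Pis \<beta> m is \<longleftrightarrow> length is = length \<beta> \<and> sorted_wrt (<) is \<and> (\<forall>j\<in>set is. j \<ge> 1) \<and> m = spread is \<beta>"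

lemma Pis_map:
  assumes "Pis \<beta> m is" shows "\<beta> = map m is"
proof (rule nth_equalityI)
  show "length \<beta> = length (map m is)" using assms by (simp add: Pis_def)
  fix j assume "j < length \<beta>"
  then show "\<beta> ! j = map m is ! j" using assms spread_nth[of "is" \<beta> j]
    by (auto simp: Pis_def strict_sorted_iff)
qed

lemma Pis_supp:
  assumes "Pis \<beta> m is" "composition \<beta>"
  shows "set is = {x. m x \<noteq> 0}"
proof -
  have d: "distinct is" using assms(1) unfolding Pis_def strict_sorted_iff by blast
  have l: "length \<beta> = length is" using assms(1) unfolding Pis_def by simp
  have me: "m = spread is \<beta>" using assms(1) unfolding Pis_def by blast
  have A: "m x \<noteq> 0" if xin: "x \<in> set is" for x
  proof -
    obtain j where j: "j < length is" "x = is ! j" using xin by (metis in_set_conv_nth)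
    have mx: "m x = \<beta> ! j" using j spread_nth[OF d l j(1)] me by simp
    have bs: "\<beta> ! j \<in> set \<beta>" using j l by simp
    have b1: "\<beta> ! j \<ge> 1" using assms(2) bs unfolding composition_def by blast
    show ?thesis using mx b1 by simp
  qed
  have B: "m x = 0" if xn: "x \<notin> set is" for x using spread_out[OF xn l] me by simp
  show ?thesis
  proof (rule set_eqI)
    fix x show "x \<in> set is \<longleftrightarrow> x \<in> {x. m x \<noteq> 0}"
    proof
      assume "x \<in> set is" then show "x \<in> {x. m x \<noteq> 0}" using A by simp
    next
      assume "x \<in> {x. m x \<noteq> 0}"
      then have "m x \<noteq> 0" by simp
      then show "x \<in> set is" using B by metis
    qed
  qed
qed

lemma Pis_unique:
  assumes "Pis \<beta> m is1" "Pis \<beta>' m is2" "composition \<beta>" "composition \<beta>'"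
  shows "is1 = is2"
proof -
  have e: "set is1 = set is2" using Pis_supp[OF assms(1,3)] Pis_supp[OF assms(2,4)] by (rule trans_sym)
  have s1: "sorted_wrt (<) is1" using assms(1) unfolding Pis_def by blast
  have s2: "sorted_wrt (<) is2" using assms(2) unfolding Pis_def by blast
  show ?thesis using sorted_distinct_set_unique[of is1 is2] s1 s2 e unfolding strict_sorted_iff by blast
qed

lemma M_val:
  assumes "composition \<beta>"
  shows "M_qsym \<beta> m = (if \<exists>is. Pis \<beta> m is then 1 else 0)"
proof -
  have eq: "{is. length is = length \<beta> \<and> sorted_wrt (<) is \<and> (\<forall>j\<in>set is. j \<ge> 1) \<and>
        m = (\<lambda>x. \<Sum>j<length \<beta>. if is ! j = x then \<beta> ! j else 0)} = {is. Pis \<beta> m is}"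
    by (simp add: Pis_def spread_def)
  show ?thesis
  proof (cases "\<exists>is. Pis \<beta> m is")
    case True
    then obtain is0 where "Pis \<beta> m is0" by auto
    then have e: "{is. Pis \<beta> m is} = {is0}" using Pis_unique assms by blast
    show ?thesis unfolding M_qsym_def eq e using True by simp
  next
    case False
    then have e: "{is. Pis \<beta> m is} = {}" by auto
    show ?thesis unfolding M_qsym_def eq e using False by simp
  qed
qed

lemma comp_snoc: "composition (\<alpha> @ [1]) \<longleftrightarrow> composition \<alpha>"
  by (auto simp: composition_def)

lemma shift1_eval:
  assumes "composition \<alpha>" "Pis (\<alpha> @ [1]) m is"
  shows "shift1 G m = G (comp_monomial \<alpha>)"
proof -
  have c1: "composition (\<alpha> @ [1])" using assms comp_snoc by auto
  have "{\<alpha>'. composition \<alpha>' \<and> M_qsym (\<alpha>' @ [1]) m \<noteq> 0} = {\<alpha>}"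
  proof (safe)
    fix \<alpha>' assume a: "composition \<alpha>'" "M_qsym (\<alpha>' @ [1]) m \<noteq> 0"
    then obtain is' where p: "Pis (\<alpha>' @ [1]) m is'" using M_val[of "\<alpha>' @ [1]"] comp_snoc
      by (auto split: if_splits)
    have c2: "composition (\<alpha>' @ [1])" using a comp_snoc by auto
    have "is' = is" using Pis_unique[OF p assms(2) c2 c1] .
    then have "\<alpha>' @ [1] = \<alpha> @ [1]" using Pis_map[OF p] Pis_map[OF assms(2)] by simp
    then show "\<alpha>' = \<alpha>" by simp
  next
    show "composition \<alpha>" by fact
  next
    assume z: "M_qsym (\<alpha> @ [1]) m = 0"
    have "\<exists>is. Pis (\<alpha> @ [1]) m is" using assms(2) by blast
    then show False using z M_val[OF c1, of m] by simp
  qed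
  moreover have "M_qsym (\<alpha> @ [1]) m = 1"
  proof -
    have "\<exists>is. Pis (\<alpha> @ [1]) m is" using assms(2) by blast
    then show ?thesis using M_val[OF c1, of m] by simp
  qed
  ultimately show ?thesis unfolding shift1_def by simp
qed

lemma shift1_zero:
  assumes "\<not> (\<exists>\<alpha> is. composition \<alpha> \<and> Pis (\<alpha> @ [1]) m is)"
  shows "shift1 G m = 0"
proof -
  have z: "M_qsym (\<alpha>' @ [1]) m = 0" if "composition \<alpha>'" for \<alpha>'
  proof -
    have c: "composition (\<alpha>' @ [1])" using that comp_snoc by blast
    have "\<not> (\<exists>is. Pis (\<alpha>' @ [1]) m is)" using assms that by blast
    then show ?thesis using M_val[OF c, of m] by simp
  qed
  have "{\<alpha>'. composition \<alpha>' \<and> M_qsym (\<alpha>' @ [1]) m \<noteq> 0} = {}"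
    using z by blast
  then show ?thesis unfolding shift1_def by simp
qed




lemma ordered_comp:
  fixes f :: "nat \<Rightarrow> nat"
  assumes sm: "strict_mono f" and f0: "f 0 = 0"
  shows "ordered_coloring W D (f \<circ> col) \<longleftrightarrow> ordered_coloring W D col"
proof -
  have z: "f x = 0 \<longleftrightarrow> x = 0" for x using strict_mono_eq[OF sm, of x 0] f0 by simp
  have o: "Suc 0 \<le> f x \<longleftrightarrow> Suc 0 \<le> x" for x using z[of x] by linarith
  have s: "{v\<in>W. f (col v) < f (col u)} = {v\<in>W. col v < col u}" for u
    using strict_mono_less[OF sm] by simp
  show ?thesis unfolding ordered_coloring_def comp_def s
    by (simp add: z o strict_mono_eq[OF sm])
qed

lemma F_qsym:
  fixes f :: "nat \<Rightarrow> nat"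
  assumes fin: "finite W" and sm: "strict_mono f" and f0: "f 0 = 0"
    and rng: "\<And>y. y \<notin> range f \<Longrightarrow> m y = 0"
  shows "F_graph W D m = F_graph W D (m \<circ> f)"
proof -
  let ?A = "{col. ordered_coloring W D col \<and> (\<forall>i. (m \<circ> f) i = card {v\<in>W. col v = i})}"
  let ?B = "{col. ordered_coloring W D col \<and> (\<forall>i. m i = card {v\<in>W. col v = i})}"
  have injf: "inj f" using sm strict_mono_imp_inj_on by blast
  have cc: "card {v\<in>W. f (col v) = f x} = card {v\<in>W. col v = x}" for col x
    using injf by (simp add: inj_eq)
  have "bij_betw (\<lambda>col. f \<circ> col) ?A ?B"
  proof (rule bij_betwI')
    fix x y assume "x \<in> ?A" "y \<in> ?A"
    show "(f \<circ> x = f \<circ> y) = (x = y)"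
      using injf by (auto simp: fun_eq_iff inj_eq)
  next
    fix col assume a: "col \<in> ?A"
    have "ordered_coloring W D (f \<circ> col)" using a ordered_comp[OF sm f0] by auto
    moreover have "m i = card {v\<in>W. (f \<circ> col) v = i}" for i
    proof (cases "i \<in> range f")
      case True
      then obtain x where "i = f x" by auto
      then show ?thesis using a cc[of col x] by auto
    next
      case False
      then have e: "{v\<in>W. (f \<circ> col) v = i} = {}" by auto
      show ?thesis using rng[OF False] by (simp only: e card.empty)
    qed
    ultimately show "f \<circ> col \<in> ?B" by auto
  next
    fix col assume b: "col \<in> ?B"
    have inr: "col v \<in> range f" for v
    proof (cases "v \<in> W")
      case True
      have "card {v'\<in>W. col v' = col v} \<noteq> 0" using fin True by auto
      then have "m (col v) \<noteq> 0" using b by auto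
      then show ?thesis using rng[of "col v"] by metis
    next
      case False
      have "ordered_coloring W D col" using b by blast
      then have "col v = 0" using False unfolding ordered_coloring_def by blast
      then show ?thesis using f0 by (metis rangeI)
    qed
    define col0 where "col0 = inv f \<circ> col"
    have fc: "f \<circ> col0 = col" unfolding col0_def using inr by (auto simp: fun_eq_iff f_inv_into_f)
    have "ordered_coloring W D col0" using b ordered_comp[OF sm f0, of W D col0] fc by auto
    moreover have "(m \<circ> f) i = card {v\<in>W. col0 v = i}" for i
      using b cc[of col0 i] fc by (auto simp: comp_def fun_eq_iff)
    ultimately show "\<exists>x\<in>?A. col = f \<circ> x" using fc by (intro bexI[of _ col0]) auto
  qed
  then have "card ?A = card ?B" by (rule bij_betw_same_card)
  then show ?thesis unfolding F_graph_def by simp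
qed




lemma walk_induced: "set xs \<subseteq> S \<Longrightarrow> is_walk E xs \<Longrightarrow> is_walk (induced E S) xs"
  unfolding is_walk_def induced_def by (auto simp: subset_iff)

lemma walk_uninduce: "is_walk (induced E S) xs \<Longrightarrow> is_walk E xs"
  unfolding is_walk_def induced_def by auto

lemma restrict_ordered:
  assumes o: "ordered_coloring V E col" and i: "i \<in> V" and lt: "\<And>v. v \<in> V \<Longrightarrow> v \<noteq> i \<Longrightarrow> col v < col i"
  shows "ordered_coloring (V - {i}) (induced E (V - {i})) (col(i:=0))"
  unfolding ordered_coloring_def
proof (intro conjI ballI allI impI)
  fix v assume "v \<notin> V - {i}" then show "(col(i := 0)) v = 0" using o unfolding ordered_coloring_def by auto
next
  fix v assume "v \<in> V - {i}" then show "1 \<le> (col(i := 0)) v" using o unfolding ordered_coloring_def by auto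
next
  fix u w assume u: "u \<in> V - {i}" and w: "w \<in> V - {i}" and uw: "u \<noteq> w \<and> (col(i := 0)) u = (col(i := 0)) w"
  show "\<not> path_through (induced E (V - {i})) {v \<in> V - {i}. (col(i := 0)) v < (col(i := 0)) u} u w"
  proof
    assume "path_through (induced E (V - {i})) {v \<in> V - {i}. (col(i := 0)) v < (col(i := 0)) u} u w"
    then obtain ps where ps: "set ps \<subseteq> {v \<in> V - {i}. (col(i := 0)) v < (col(i := 0)) u}"
      "distinct (u # ps @ [w])" "is_walk (induced E (V - {i})) (u # ps @ [w])"
      unfolding path_through_def by blast
    have "set ps \<subseteq> {v \<in> V. col v < col u}" using ps(1) u by auto
    then have "path_through E {v \<in> V. col v < col u} u w" unfolding path_through_def
      using ps walk_uninduce by blast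
    then show False using o u w uw unfolding ordered_coloring_def by auto
  qed
qed

lemma extend_ordered:
  assumes o: "ordered_coloring (V - {i}) (induced E (V - {i})) col" and i: "i \<in> V"
    and lt: "\<And>v. v \<in> V - {i} \<Longrightarrow> col v < c" and c: "c \<ge> 1"
  shows "ordered_coloring V E (col(i:=c))"
  unfolding ordered_coloring_def
proof (intro conjI ballI allI impI)
  fix v assume "v \<notin> V" then show "(col(i := c)) v = 0" using o i unfolding ordered_coloring_def by auto
next
  fix v assume "v \<in> V" then show "1 \<le> (col(i := c)) v" using o c unfolding ordered_coloring_def by auto
next
  fix u w assume u: "u \<in> V" and w: "w \<in> V" and uw: "u \<noteq> w \<and> (col(i := c)) u = (col(i := c)) w"
  have ui: "u \<noteq> i"
  proof
    assume "u = i" then have "col w = c" "w \<in> V - {i}" using uw w by auto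
    then show False using lt by fastforce
  qed
  have wi: "w \<noteq> i"
  proof
    assume "w = i" then have "col u = c" "u \<in> V - {i}" using uw u by auto
    then show False using lt by fastforce
  qed
  have S: "{v \<in> V. (col(i := c)) v < (col(i := c)) u} = {v \<in> V - {i}. col v < col u}"
  proof -
    have cu: "col u < c" using lt u ui by auto
    show ?thesis using ui cu by (auto simp: fun_upd_def)
  qed
  show "\<not> path_through E {v \<in> V. (col(i := c)) v < (col(i := c)) u} u w"
  proof
    assume "path_through E {v \<in> V. (col(i := c)) v < (col(i := c)) u} u w"
    then obtain ps where ps: "set ps \<subseteq> {v \<in> V - {i}. col v < col u}"
      "distinct (u # ps @ [w])" "is_walk E (u # ps @ [w])"
      unfolding path_through_def S by blast
    have "set (u # ps @ [w]) \<subseteq> V - {i}" using ps(1) u w ui wi by auto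
    then have "is_walk (induced E (V - {i})) (u # ps @ [w])" using walk_induced ps(3) by blast
    then have "path_through (induced E (V - {i})) {v \<in> V - {i}. col v < col u} u w"
      unfolding path_through_def using ps by blast
    then show False using o u w uw ui wi unfolding ordered_coloring_def by auto
  qed
qed

lemma unique_max:
  assumes sg: "simple_graph V E" and cg: "connected_graph V E" and o: "ordered_coloring V E col"
    and u: "u \<in> V" and w: "w \<in> V" and cu: "col u = c" and cw: "col w = c"
    and lec: "\<And>v. v \<in> V \<Longrightarrow> col v \<le> c"
  shows "u = w"
proof (rule ccontr)
  assume uw: "u \<noteq> w"
  have sg': "\<And>a b. E a b \<Longrightarrow> a \<noteq> b" using sg unfolding simple_graph_def by auto
  obtain xs where xs: "xs \<noteq> []" "hd xs = u" "last xs = w" "set xs \<subseteq> V" "is_walk E xs"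
    using cg u w unfolding connected_graph_def by blast
  have "length xs \<noteq> 1" using xs uw by (cases xs) auto
  then obtain ys where ys: "xs = u # ys @ [w]" using xs
    by (cases xs rule: rev_cases) (auto, metis hd_Cons_tl hd_append2 list.sel(1) self_append_conv2 snoc_eq_iff_butlast)
  have "(\<exists>w'. col w' = c \<and> w' \<noteq> u \<and> path_through E {v\<in>V. col v < c} u w') \<or>
    (col w < c \<and> (\<exists>ps. set ps \<subseteq> {v\<in>V. col v < c} \<and> is_walk E (u # ps @ [w])))"
    using reach_max[where E=E and col=col and u=u and c=c and V=V and ys=ys and w=w, OF sg' cu lec] xs ys w uw by auto
  then obtain w' where w': "col w' = c" "w' \<noteq> u" "path_through E {v\<in>V. col v < c} u w'"
    using cw by auto
  then obtain ps where ps: "is_walk E (u # ps @ [w'])" unfolding path_through_def by blast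
  have "E (last (u # ps)) w'" using ps walk_snoc[of "u # ps" E w'] by simp
  then have "w' \<in> V" using sg unfolding simple_graph_def by auto
  then show False using o u w' cu unfolding ordered_coloring_def by auto
qed




lemma le_last: "sorted xs \<Longrightarrow> x \<in> set xs \<Longrightarrow> x \<le> last xs"
proof (induction xs)
  case (Cons a xs)
  then show ?case by (cases "xs = []") auto
qed simp

lemma card_pos_col: "finite V \<Longrightarrow> v \<in> V \<Longrightarrow> card {v'\<in>V. col v' = col v} \<noteq> 0"
  by auto

lemma ordered_zero: "ordered_coloring W D g \<Longrightarrow> x \<notin> W \<Longrightarrow> g x = 0"
  unfolding ordered_coloring_def by blast

lemma main_pw:
  assumes fin: "finite V" and ne: "V \<noteq> {}" and sg: "simple_graph V E" and cg: "connected_graph V E"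
  shows "F_graph V E m = (\<Sum>i\<in>V. shift1 (F_graph (V - {i}) (induced E (V - {i}))) m)"
proof -
  define L where "L = {col. ordered_coloring V E col \<and> (\<forall>x. m x = card {v\<in>V. col v = x})}"
  have FL: "F_graph V E m = int (card L)" unfolding F_graph_def L_def ..
  show ?thesis
  proof (cases "\<exists>\<alpha> is. composition \<alpha> \<and> Pis (\<alpha> @ [1]) m is")
    case True
    then obtain \<alpha> "is" where ca: "composition \<alpha>" and P: "Pis (\<alpha> @ [1]) m is" by blast
    have ca1: "composition (\<alpha> @ [1])" using ca comp_snoc by auto
    have pm: "\<alpha> @ [1] = map m is" using Pis_map[OF P] .
    have supp: "set is = {x. m x \<noteq> 0}" using Pis_supp[OF P ca1] .
    define k where "k = length \<alpha>"
    have len: "length is = Suc k" using P unfolding Pis_def k_def by simp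
    have sw: "sorted_wrt (<) is" using P unfolding Pis_def by blast
    then have srt: "sorted is" and dist: "distinct is" using strict_sorted_iff by blast+
    have ge1: "\<And>j. j \<in> set is \<Longrightarrow> j \<ge> 1" using P unfolding Pis_def by blast
    define c where "c = is ! k"
    have isne: "is \<noteq> []" using len by auto
    have clast: "last is = c" unfolding c_def using isne len by (simp add: last_conv_nth)
    have mc: "m c = 1"
    proof -
      have "(\<alpha> @ [1]) ! k = 1" unfolding k_def by simp
      then show ?thesis using pm len unfolding c_def by (metis lessI nth_map)
    qed
    have cin: "c \<in> set is" unfolding c_def using len by simp
    have lec: "\<And>x. x \<in> set is \<Longrightarrow> x \<le> c" using le_last[OF srt] clast by auto
    have c1: "c \<ge> 1" using ge1 cin by auto
    define m' where "m' = m(c := 0)"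
    define L' where "L' i = {col. ordered_coloring (V - {i}) (induced E (V - {i})) col \<and>
        (\<forall>x. m' x = card {v\<in>V - {i}. col v = x})}" for i
    define f where "f x = (if x = 0 then 0 else if x \<le> k then is ! (x - 1) else is ! k + x)" for x
    have ltk: "\<And>j. j < k \<Longrightarrow> is ! j < c" unfolding c_def using sorted_wrt_nth_less[OF sw] len by auto
    have sm: "strict_mono f"
    unfolding strict_mono_Suc_iff
    proof
      fix x show "f x < f (Suc x)"
      proof (cases "x = 0")
        case True
        have "is ! 0 \<ge> 1" using ge1 len by simp
        then show ?thesis using True unfolding f_def by auto
      next
        case False
        show ?thesis
        proof (cases "Suc x \<le> k")
          case True
          then show ?thesis using False sorted_wrt_nth_less[OF sw, of "x - 1" x] len unfolding f_def by auto
        next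
          case F2: False
          show ?thesis
          proof (cases "x \<le> k")
            case True
            then have "x = k" using F2 by simp
            then show ?thesis using False ltk[of "x - 1"] unfolding f_def c_def by auto
          next
            case False
            then show ?thesis unfolding f_def by auto
          qed
        qed
      qed
    qed
    have f0: "f 0 = 0" unfolding f_def by simp
    have mout: "\<And>x. x \<notin> set is \<Longrightarrow> m x = 0" using supp by auto
    have rng: "m' y = 0" if "y \<notin> range f" for y
    proof (rule ccontr)
      assume "m' y \<noteq> 0"
      then have "y \<in> set is" "y \<noteq> c" using supp unfolding m'_def by (auto split: if_splits)
      then obtain j where j: "j < Suc k" "y = is ! j" using len by (metis in_set_conv_nth)
      then have "j \<noteq> k" using \<open>y \<noteq> c\<close> unfolding c_def by auto
      then have "f (Suc j) = y" using j unfolding f_def by auto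
      then show False using that by auto
    qed
    have mf: "m' \<circ> f = comp_monomial \<alpha>"
    proof
      fix x show "(m' \<circ> f) x = comp_monomial \<alpha> x"
      proof (cases "x = 0")
        case True
        have "0 \<notin> set is" using ge1 by force
        then show ?thesis using True mout unfolding f_def comp_monomial_def m'_def by auto
      next
        case False
        show ?thesis
        proof (cases "x \<le> k")
          case True
          have "x - 1 < k" using True False by simp
          then have "is ! (x - 1) < c" using ltk by blast
          then have ne: "is ! (x - 1) \<noteq> c" by simp
          have "m (is ! (x - 1)) = (\<alpha> @ [1]) ! (x - 1)" using pm len True False by (simp add: nth_map)
          also have "\<dots> = \<alpha> ! (x - 1)" using \<open>x - 1 < k\<close> unfolding k_def by (simp add: nth_append)
          finally show ?thesis using True False ne unfolding f_def comp_monomial_def m'_def k_def by auto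
        next
          case F2: False
          have "is ! k + x \<notin> set is" using lec F2 unfolding c_def by force
          then show ?thesis using F2 False mout unfolding f_def comp_monomial_def m'_def k_def by auto
        qed
      qed
    qed
    have RHS: "shift1 (F_graph (V - {i}) (induced E (V - {i}))) m = int (card (L' i))" for i
    proof -
      have "shift1 (F_graph (V - {i}) (induced E (V - {i}))) m
          = F_graph (V - {i}) (induced E (V - {i})) (comp_monomial \<alpha>)" using shift1_eval[OF ca P] .
      also have "\<dots> = F_graph (V - {i}) (induced E (V - {i})) m'"
        using F_qsym[where W="V - {i}" and D="induced E (V - {i})" and f=f and m=m', OF _ sm f0 rng] fin mf by simp
      also have "\<dots> = int (card (L' i))" unfolding F_graph_def L'_def ..
      finally show ?thesis .
    qed
    have L'lt: "col v < c" "col v \<in> set is" if "col \<in> L' i" "v \<in> V - {i}" for col i v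
    proof -
      have "card {v'\<in>V - {i}. col v' = col v} \<noteq> 0" using fin that(2) by auto
      then have "m' (col v) \<noteq> 0" using that(1) unfolding L'_def by auto
      then have "col v \<in> set is" "col v \<noteq> c" using supp unfolding m'_def by (auto split: if_splits)
      then show "col v < c" "col v \<in> set is" using lec by force+
    qed
    have L'0: "col i = 0" if "col \<in> L' i" for col i
      using that unfolding L'_def ordered_coloring_def by auto
    have Leq: "L = (\<Union>i\<in>V. (\<lambda>col. col(i := c)) ` L' i)"
    proof (intro equalityI subsetI)
      fix col assume cL: "col \<in> L"
      then have oc: "ordered_coloring V E col" and cm: "\<And>x. m x = card {v\<in>V. col v = x}"
        unfolding L_def by auto
      have "card {v\<in>V. col v = c} = 1" using cm mc by simp
      then obtain i where ii: "{v\<in>V. col v = c} = {i}" using card_1_singletonE by blast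
      then have iV: "i \<in> V" and ci: "col i = c" by auto
      have colin: "col v \<in> set is" if "v \<in> V" for v
        using card_pos_col[OF fin that, of col] cm supp by auto
      have ltc: "col v < c" if "v \<in> V" "v \<noteq> i" for v
      proof -
        have "col v \<noteq> c" using ii that by auto
        then show ?thesis using lec colin that by force
      qed
      have "col(i := 0) \<in> L' i"
        unfolding L'_def
      proof (intro CollectI conjI allI)
        show "ordered_coloring (V - {i}) (induced E (V - {i})) (col(i := 0))"
          using restrict_ordered[OF oc iV] ltc ci by auto
      next
        fix x
        show "m' x = card {v\<in>V - {i}. (col(i := 0)) v = x}"
        proof (cases "x = c")
          case True
          have e: "{v\<in>V - {i}. (col(i := 0)) v = x} = {}"
          proof (rule equals0I)
            fix v assume "v \<in> {v\<in>V - {i}. (col(i := 0)) v = x}"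
            then have "v \<in> V" "v \<noteq> i" "col v = c" using True by auto
            then show False using ltc[of v] by simp
          qed
          show ?thesis unfolding e using True unfolding m'_def by simp
        next
          case False
          then have e: "{v\<in>V - {i}. (col(i := 0)) v = x} = {v\<in>V. col v = x}" using ci by auto
          show ?thesis unfolding e using False cm unfolding m'_def by simp
        qed
      qed
      moreover have "col = (col(i := 0))(i := c)" using ci by auto
      ultimately show "col \<in> (\<Union>i\<in>V. (\<lambda>col. col(i := c)) ` L' i)" using iV by blast
    next
      fix col assume "col \<in> (\<Union>i\<in>V. (\<lambda>col. col(i := c)) ` L' i)"
      then obtain i col' where iV: "i \<in> V" and c': "col' \<in> L' i" and col: "col = col'(i := c)" by blast
      have oc': "ordered_coloring (V - {i}) (induced E (V - {i})) col'" using c' unfolding L'_def by auto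
      have "ordered_coloring V E col" using extend_ordered[OF oc' iV _ c1] L'lt[OF c'] col by auto
      moreover have "m x = card {v\<in>V. col v = x}" for x
      proof (cases "x = c")
        case True
        have e: "{v\<in>V. col v = x} = {i}"
        proof (intro equalityI subsetI)
          fix v assume v: "v \<in> {v\<in>V. col v = x}"
          show "v \<in> {i}"
          proof (rule ccontr)
            assume "v \<notin> {i}"
            then have "v \<in> V - {i}" "col' v = c" using v col True by auto
            then show False using L'lt(1)[OF c', of v] by simp
          qed
        qed (use iV col True in auto)
        show ?thesis unfolding e using True mc by simp
      next
        case False
        then have e: "{v\<in>V. col v = x} = {v\<in>V - {i}. col' v = x}" using col by auto
        have "m' x = card {v\<in>V - {i}. col' v = x}" using c' unfolding L'_def by blast
        then show ?thesis unfolding e using False unfolding m'_def by simp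
      qed
      ultimately show "col \<in> L" unfolding L_def by auto
    qed
    have finL': "finite (L' i)" for i
    proof (rule finite_subset)
      show "L' i \<subseteq> {g. \<forall>x. (x \<in> V - {i} \<longrightarrow> g x \<in> set is) \<and> (x \<notin> V - {i} \<longrightarrow> g x = 0)}"
      proof
        fix g assume g: "g \<in> L' i"
        have o: "ordered_coloring (V - {i}) (induced E (V - {i})) g" using g unfolding L'_def by simp
        have "\<forall>x. x \<notin> V - {i} \<longrightarrow> g x = 0" using ordered_zero[OF o] by blast
        moreover have "\<forall>x. x \<in> V - {i} \<longrightarrow> g x \<in> set is" using L'lt(2)[OF g] by blast
        ultimately show "g \<in> {g. \<forall>x. (x \<in> V - {i} \<longrightarrow> g x \<in> set is) \<and> (x \<notin> V - {i} \<longrightarrow> g x = 0)}"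
          by simp
      qed
      show "finite {g. \<forall>x. (x \<in> V - {i} \<longrightarrow> g x \<in> set is) \<and> (x \<notin> V - {i} \<longrightarrow> g x = (0::nat))}"
        using fin by (intro finite_set_of_finite_funs) auto
    qed
    have injI: "inj_on (\<lambda>col. col(i := c)) (L' i)" for i
    proof (rule inj_onI)
      fix x y assume "x \<in> L' i" "y \<in> L' i" "x(i := c) = y(i := c)"
      then show "x = y" using L'0 by (metis fun_upd_triv fun_upd_upd)
    qed
    have disj: "(\<lambda>col. col(i := c)) ` L' i \<inter> (\<lambda>col. col(j := c)) ` L' j = {}"
      if "i \<in> V" "j \<in> V" "i \<noteq> j" for i j
    proof (rule ccontr)
      assume "\<not> ?thesis"
      then obtain z where "z \<in> (\<lambda>col. col(i := c)) ` L' i" "z \<in> (\<lambda>col. col(j := c)) ` L' j" by blast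
      then obtain x y where x: "x \<in> L' i" and y: "y \<in> L' j" and e: "x(i := c) = y(j := c)" by (auto simp: image_iff)
      have "x j < c" using L'lt(1)[OF x, of j] that by auto
      moreover have "(x(i := c)) j = c" using e by simp
      ultimately show False using that by simp
    qed
    have "card L = (\<Sum>i\<in>V. card ((\<lambda>col. col(i := c)) ` L' i))"
      unfolding Leq using fin finL' disj by (intro card_UN_disjoint) auto
    also have "\<dots> = (\<Sum>i\<in>V. card (L' i))" using injI by (intro sum.cong refl card_image)
    finally have "int (card L) = (\<Sum>i\<in>V. int (card (L' i)))" by simp
    then show ?thesis unfolding FL RHS .
  next
    case False
    have RHS: "shift1 G m = 0" for G using shift1_zero[OF False] .
    have "L = {}"
    proof (rule ccontr)
      assume "L \<noteq> {}"
      then obtain col where oc: "ordered_coloring V E col" and cm: "\<And>x. m x = card {v\<in>V. col v = x}"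
        unfolding L_def by auto
      define "is" where "is = sorted_list_of_set (col ` V)"
      have setis: "set is = col ` V" unfolding is_def using fin by simp
      have srt: "sorted is" and dist: "distinct is" unfolding is_def by auto
      have isne: "is \<noteq> []" using setis ne by auto
      define c where "c = last is"
      have cin: "c \<in> col ` V" using isne setis unfolding c_def by (metis last_in_set)
      have lec: "\<And>v. v \<in> V \<Longrightarrow> col v \<le> c" using le_last[OF srt] setis unfolding c_def by auto
      have mpos: "m x \<noteq> 0 \<longleftrightarrow> x \<in> set is" for x
        using cm[of x] fin setis by (auto simp: card_eq_0_iff)
      obtain u where u: "u \<in> V" "col u = c" using cin by auto
      have "{v\<in>V. col v = c} = {u}" using unique_max[OF sg cg oc _ _ _ _ lec] u by auto
      then have mc: "m c = 1" using cm by simp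
      define \<alpha> where "\<alpha> = map m (butlast is)"
      have ism: "map m is = \<alpha> @ [1]"
      proof -
        have "is = butlast is @ [c]" using isne unfolding c_def by simp
        then have "map m is = map m (butlast is) @ [m c]" by (metis map_append list.map)
        then show ?thesis using mc unfolding \<alpha>_def by simp
      qed
      have ca: "composition \<alpha>" unfolding composition_def \<alpha>_def
      proof
        fix a assume "a \<in> set (map m (butlast is))"
        then obtain x where x: "x \<in> set (butlast is)" "a = m x" by auto
        then have "x \<in> set is" using in_set_butlastD by metis
        then have "m x \<noteq> 0" using mpos by blast
        then show "1 \<le> a" using x by simp
      qed
      have "Pis (\<alpha> @ [1]) m is" unfolding Pis_def
      proof (intro conjI)
        show "length is = length (\<alpha> @ [1])" using ism by (metis length_map)
        show "sorted_wrt (<) is" using srt dist strict_sorted_iff by blast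
        show "\<forall>j\<in>set is. 1 \<le> j" using setis oc unfolding ordered_coloring_def by auto
        show "m = spread is (\<alpha> @ [1])"
        proof
          fix x
          show "m x = spread is (\<alpha> @ [1]) x"
          proof (cases "x \<in> set is")
            case True
            then obtain j where j: "j < length is" "x = is ! j" by (metis in_set_conv_nth)
            have "spread is (map m is) (is ! j) = map m is ! j"
              using spread_nth[OF dist _ j(1)] by simp
            moreover have "m (is ! j) = map m is ! j" using j by simp
            ultimately show ?thesis using j ism by simp
          next
            case False
            then show ?thesis using spread_out[OF False, of "\<alpha> @ [1]"] ism mpos
              by (metis length_map)
          qed
        qed
      qed
      then show False using False ca by blast
    qed
    then show ?thesis unfolding FL RHS by simp
  qed
qed


theorem mainTheorem15:
  fixes n :: nat and E :: "nat \<Rightarrow> nat \<Rightarrow> bool"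
  assumes "n \<ge> 1"
    and "simple_graph {1..n} E"
    and "connected_graph {1..n} E"
  shows "F_graph {1..n} E =
           (\<lambda>m. \<Sum>i\<in>{1..n}. shift1 (F_graph ({1..n} - {i}) (induced E ({1..n} - {i}))) m)"
proof (rule ext)
  fix m
  have ne: "{1..n} \<noteq> {}" using assms(1) by simp
  show "F_graph {1..n} E m =
           (\<Sum>i\<in>{1..n}. shift1 (F_graph ({1..n} - {i}) (induced E ({1..n} - {i}))) m)"
    by (rule main_pw[OF finite_atLeastAtMost ne assms(2,3)])
qed

end
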